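(* Let $0<\alpha<n$, $0<t\le s<\infty$ and $0<q_j\le p_j<\infty$ for $j=1,2$. Suppose that $\frac1s=\frac1{p_1}+\frac1{p_2}-\frac\alpha n$ and $\frac ts>\max\left(\frac{q_1}{p_1},\frac{q_2}{p_2}\right)$. Then there exists no constant $C>0$ such that $$\|B_\alpha(f,g)\|_{\mathcal{M}^s_t}\le C\,\|f\|_{\mathcal{M}^{p_1}_{q_1}}\|g\|_{\mathcal{M}^{p_2}_{q_2}}$$ holds for all (nonnegative measurable) $f,g$ with $\|f\|_{\mathcal{M}^{p_1}_{q_1}}\|g\|_{\mathcal{M}^{p_2}_{q_2}}<\infty$.
   Context: For $0<\alpha<n$ the bilinear fractional integral operator is $B_\alpha(f,g)(x)=\int_{\mathbb{R}^n}\frac{f(x-y)g(x+y)}{|y|^{n-\alpha}}\,dy$. $\mathscr{D}$ denotes the set of dyadic cubes $2^k(m+[0,1)^n)$, $k\in\mathbb{Z}$, $m\in\mathbb{Z}^n$, and $\fint_Q h=\frac1{|Q|}\int_Q h$. For $0<q\le p<\infty$ the Morrey (quasi-)norm is $\|f\|_{\mathcal{M}^p_q}=\sup_{Q\in\mathscr{D}}|Q|^{1/p}\left(\fint_Q|f(x)|^q\,dx\right)^{1/q}$. *)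

theory Defs
  imports "HOL-Analysis.Analysis"
begin

text \<open>Real powers of extended nonnegative reals (used only with positive exponents r):
  \<infinity> to a positive power is \<infinity>.\<close>
definition epow :: "ennreal \<Rightarrow> real \<Rightarrow> ennreal" where
  "epow x r = (if x = \<infinity> then \<infinity> else ennreal (enn2real x powr r))"

definition dyadic_cube :: "int \<Rightarrow> int ^ 'n \<Rightarrow> (real ^ 'n::finite) set" where
  "dyadic_cube k m = {x. \<forall>i. 2 powr real_of_int k * real_of_int (m $ i) \<le> x $ i
                            \<and> x $ i < 2 powr real_of_int k * (real_of_int (m $ i) + 1)}"

definition dyadic_cubes :: "(real ^ 'n::finite) set set" where
  "dyadic_cubes = {Q. \<exists>k m. Q = dyadic_cube k m}"

definition morrey_norm :: "real \<Rightarrow> real \<Rightarrow> (real ^ 'n::finite \<Rightarrow> ennreal) \<Rightarrow> ennreal" where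
  "morrey_norm p q h = (SUP Q\<in>dyadic_cubes.
      ennreal (measure lebesgue Q powr (1 / p)) *
      epow (ennreal (1 / measure lebesgue Q) * (\<integral>\<^sup>+ x\<in>Q. epow (h x) q \<partial>lebesgue)) (1 / q))"

definition bilinear_frac_int :: "real \<Rightarrow> (real ^ 'n::finite \<Rightarrow> real) \<Rightarrow> (real ^ 'n \<Rightarrow> real)
    \<Rightarrow> real ^ 'n \<Rightarrow> ennreal" where
  "bilinear_frac_int \<alpha> f g x = (\<integral>\<^sup>+ y. ennreal (f (x - y) * g (x + y) / norm y powr (real CARD('n) - \<alpha>)) \<partial>lebesgue)"

end

theory Submission imports Defs begin

definition pc :: "nat \<Rightarrow> nat \<Rightarrow> int \<Rightarrow> real set" where
  "pc a b j = {real_of_int j * 2 powr (- real b) ..< real_of_int j * 2 powr (- real b) + 2 powr (- real a)}"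

definition FF :: "nat \<Rightarrow> nat \<Rightarrow> real set" where
  "FF a b = (\<Union>j\<in>{0..<2^b}. pc a b j)"

definition Ik :: "int \<Rightarrow> int \<Rightarrow> real set" where
  "Ik k m = {2 powr real_of_int k * real_of_int m ..< 2 powr real_of_int k * (real_of_int m + 1)}"

lemma pc_borel[measurable]: "pc a b j \<in> sets borel" by (simp add: pc_def)
lemma FF_borel[measurable]: "FF a b \<in> sets borel" unfolding FF_def by auto
lemma Ik_borel[measurable]: "Ik k m \<in> sets borel" by (simp add: Ik_def)

lemma emeasure_pc: "emeasure lborel (pc a b j) = ennreal (2 powr (- real a))"
  by (simp add: pc_def emeasure_lborel_Ico)

lemma emeasure_Ik: "emeasure lborel (Ik k m) = ennreal (2 powr real_of_int k)"
  by (simp add: Ik_def emeasure_lborel_Ico algebra_simps)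

lemma s1: "emeasure lborel (Ik k m \<inter> FF a b) \<le> ennreal (2 powr real_of_int k)"
  by (metis emeasure_Ik emeasure_mono Ik_borel inf_le1 sets_lborel)

lemma s4: "emeasure lborel (Ik k m \<inter> FF a b) \<le> ennreal (2^b * 2 powr (- real a))"
proof -
  have "emeasure lborel (Ik k m \<inter> FF a b) \<le> emeasure lborel (FF a b)"
    by (intro emeasure_mono) auto
  also have "\<dots> \<le> (\<Sum>j\<in>{0..<2^b}. emeasure lborel (pc a b j))"
    unfolding FF_def by (intro emeasure_subadditive_finite) auto
  also have "\<dots> = ennreal (2^b * 2 powr (- real a))"
    by (simp add: emeasure_pc ennreal_of_nat_eq_real_of_nat ennreal_mult)
  finally show ?thesis .
qed

lemma s2:
  assumes "b \<le> a" and "k + int b \<le> 0"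
  shows "emeasure lborel (Ik k m \<inter> FF a b) \<le> ennreal (2 powr (- real a))"
proof -
  define u where "u = (2::real) powr (- real b)"
  define P :: int where "P = 2 ^ nat (- (k + int b))"
  have u: "u > 0" by (simp add: u_def)
  have P: "P > 0" by (simp add: P_def)
  have kk: "2 powr real_of_int k = u / real_of_int P"
  proof -
    have "real_of_int k = - real b - real (nat (- (k + int b)))" using assms by simp
    then have "2 powr real_of_int k = 2 powr (- real b) / 2 powr real (nat (- (k + int b)))"
      by (simp only: powr_diff)
    moreover have "(2::real) powr real (nat (- (k + int b))) = real_of_int P"
      by (simp add: P_def powr_realpow)
    ultimately show ?thesis by (simp add: u_def)
  qed
  have ab: "2 powr (- real a) \<le> u" unfolding u_def using assms by (intro powr_mono) auto
  define j0 where "j0 = m div P"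
  have sub: "Ik k m \<inter> FF a b \<subseteq> pc a b j0"
  proof
    fix x assume x: "x \<in> Ik k m \<inter> FF a b"
    then obtain j where j: "x \<in> pc a b j" by (auto simp: FF_def)
    have x1: "u / P * m \<le> x" "x < u / P * (m + 1)" using x by (auto simp: Ik_def kk)
    have x2: "j * u \<le> x" "x < j * u + 2 powr (- real a)" using j by (auto simp: pc_def u_def)
    have "j * u < u / P * (m + 1)" using x1 x2 by linarith
    then have "real_of_int j * u * P < u * (m + 1)" using P by (simp add: field_simps)
    then have "real_of_int (j * P) < real_of_int (m + 1)" using u by (simp add: mult.commute mult.left_commute)
    then have A: "j * P \<le> m" by linarith
    have "u / P * m < (j + 1) * u" using x1 x2 ab by (simp add: algebra_simps)
    then have "u * m < (j + 1) * u * P" using P by (simp add: field_simps)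
    then have "real_of_int m < real_of_int ((j + 1) * P)" using u by (simp add: mult.commute mult.left_commute)
    then have B: "m < (j + 1) * P" by linarith
    have r: "(m - j*P) div P = 0" using A B by (intro div_pos_pos_trivial) (auto simp: algebra_simps)
    have "m div P = (m - j*P + j*P) div P" by simp
    also have "\<dots> = j + (m - j*P) div P" using P by (subst div_mult_self1) auto
    finally have "m div P = j" using r by simp
    then show "x \<in> pc a b j0" using j by (simp add: j0_def)
  qed
  have "emeasure lborel (Ik k m \<inter> FF a b) \<le> emeasure lborel (pc a b j0)"
    by (intro emeasure_mono sub) auto
  then show ?thesis by (simp add: emeasure_pc)
qed

lemma s3:
  assumes "b \<le> a" and "k + int b \<ge> 0"
  shows "emeasure lborel (Ik k m \<inter> FF a b) \<le> ennreal (2 powr (real_of_int k + real b - real a))"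
proof -
  define u where "u = (2::real) powr (- real b)"
  define P :: int where "P = 2 ^ nat (k + int b)"
  have u: "u > 0" by (simp add: u_def)
  have P: "P > 0" by (simp add: P_def)
  have kk: "2 powr real_of_int k = u * real_of_int P"
  proof -
    have "real_of_int k = - real b + real (nat (k + int b))" using assms by simp
    then have "2 powr real_of_int k = 2 powr (- real b) * 2 powr real (nat (k + int b))"
      by (simp only: powr_add)
    moreover have "(2::real) powr real (nat (k + int b)) = real_of_int P"
      by (simp add: P_def powr_realpow)
    ultimately show ?thesis by (simp add: u_def)
  qed
  have ab: "2 powr (- real a) \<le> u" unfolding u_def using assms by (intro powr_mono) auto
  have sub: "Ik k m \<inter> FF a b \<subseteq> (\<Union>j\<in>{m*P..<(m+1)*P}. pc a b j)"
  proof
    fix x assume x: "x \<in> Ik k m \<inter> FF a b"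
    then obtain j where j: "x \<in> pc a b j" by (auto simp: FF_def)
    have x1: "u * P * m \<le> x" "x < u * P * (m + 1)" using x by (auto simp: Ik_def kk)
    have x2: "j * u \<le> x" "x < j * u + 2 powr (- real a)" using j by (auto simp: pc_def u_def)
    have "j * u < u * P * (m + 1)" using x1 x2 by linarith
    then have "real_of_int j * u < u * (P * (m + 1))" by (simp add: mult.commute mult.left_commute)
    then have "real_of_int j < real_of_int (P * (m + 1))" using u by simp
    then have "j < P * (m + 1)" by (simp only: of_int_less_iff)
    then have A: "j < (m + 1) * P" by (simp add: algebra_simps)
    have "u * P * m < (j + 1) * u" using x1 x2 ab by (simp add: algebra_simps)
    then have "u * (P * m) < u * (j + 1)" by (simp add: mult.commute mult.left_commute)
    then have "real_of_int (P * m) < real_of_int (j + 1)" using u by simp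
    then have "P * m < j + 1" by (simp only: of_int_less_iff)
    then have B: "m * P \<le> j" by (simp add: algebra_simps)
    show "x \<in> (\<Union>j\<in>{m*P..<(m+1)*P}. pc a b j)" using A B j by auto
  qed
  have "emeasure lborel (Ik k m \<inter> FF a b) \<le> emeasure lborel (\<Union>j\<in>{m*P..<(m+1)*P}. pc a b j)"
    by (intro emeasure_mono sub) auto
  also have "\<dots> \<le> (\<Sum>j\<in>{m*P..<(m+1)*P}. emeasure lborel (pc a b j))"
    by (intro emeasure_subadditive_finite) auto
  also have "\<dots> = ennreal (real_of_int P * 2 powr (- real a))"
  proof -
    have c: "card {m*P..<(m+1)*P} = nat P" by (simp add: algebra_simps)
    show ?thesis using P
      by (simp add: emeasure_pc c ennreal_of_nat_eq_real_of_nat ennreal_mult algebra_simps)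
  qed
  also have "real_of_int P * 2 powr (- real a) = 2 powr (real_of_int k + real b - real a)"
  proof -
    have "(2::real) powr real (nat (k + int b)) = real_of_int P"
      by (simp add: P_def powr_realpow)
    moreover have "real (nat (k + int b)) = real_of_int k + real b" using assms by simp
    ultimately have "real_of_int P = 2 powr (real_of_int k + real b)" by simp
    then show ?thesis by (simp add: powr_add[symmetric])
  qed
  finally show ?thesis .
qed

lemma ID:
  fixes r :: real
  assumes ba: "b \<le> a" and r0: "0 < r" and r1: "r \<le> 1" and rd: "r * real a \<le> real a - real b"
  shows "emeasure lborel (Ik k m \<inter> FF a b) \<le> ennreal (2 powr ((1 - r) * real_of_int k - r * real a))"
proof -
  let ?T = "(1 - r) * real_of_int k - r * real a"
  have mono: "ennreal (2 powr e) \<le> ennreal (2 powr ?T)" if "e \<le> ?T" for e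
    using that by (intro ennreal_leI powr_mono) auto
  consider (c1) "real_of_int k \<le> - real a" | (c2) "- real a \<le> real_of_int k" "k + int b \<le> 0"
    | (c3) "k + int b \<ge> 0" "k \<le> 0" | (c4) "k \<ge> 0" by linarith
  then show ?thesis
  proof cases
    case c1
    have "r * real_of_int k \<le> r * (- real a)" using c1 r0 by (intro mult_left_mono) auto
    then have "real_of_int k \<le> ?T" by (simp add: algebra_simps)
    then show ?thesis using s1[of k m a b] mono by (meson order_trans)
  next
    case c2
    have "(1 - r) * (- real a) \<le> (1 - r) * real_of_int k" using c2 r1 by (intro mult_left_mono) auto
    then have "- real a \<le> ?T" by (simp add: algebra_simps)
    then show ?thesis using s2[OF ba c2(2), of m] mono by (meson order_trans)
  next
    case c3
    have "r * real_of_int k \<le> 0" using c3 r0 by (simp add: mult_nonneg_nonpos)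
    then have "real_of_int k + real b - real a \<le> ?T" using rd by (simp add: algebra_simps)
    then show ?thesis using s3[OF ba c3(1), of m] mono by (meson order_trans)
  next
    case c4
    have "0 \<le> (1 - r) * real_of_int k" using c4 r1 by simp
    then have "real b - real a \<le> ?T" using rd by (simp add: algebra_simps)
    moreover have "(2::real)^b * 2 powr (- real a) = 2 powr (real b - real a)"
      by (simp add: powr_realpow[symmetric] powr_add[symmetric])
    ultimately show ?thesis using s4[of k m a b] mono by (metis order_trans)
  qed
qed



lemma Basis_vec_real: "(Basis :: (real^'n::finite) set) = range (\<lambda>i. axis i 1)"
  by (auto simp: Basis_vec_def)

lemma prod_Basis_vec_real:
  "(\<Prod>b\<in>(Basis :: (real^'n::finite) set). h b) = (\<Prod>i\<in>UNIV. h (axis i 1))"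
  unfolding Basis_vec_real
  by (subst prod.reindex) (auto simp: inj_on_def axis_eq_axis)

lemma cart_prod_set_borel:
  fixes A :: "'n::finite \<Rightarrow> real set"
  assumes "\<And>i. A i \<in> sets borel"
  shows "{x::real^'n. \<forall>i. x$i \<in> A i} \<in> sets borel"
proof -
  have "{x::real^'n. \<forall>i. x$i \<in> A i} = (\<Inter>i. (\<lambda>x. x$i) -` A i)" by auto
  also have "\<dots> \<in> sets borel"
  proof -
    have "(\<lambda>x::real^'n. x$i) -` A i \<in> sets borel" for i
    proof -
      have m: "(\<lambda>x::real^'n. x$i) \<in> borel_measurable borel"
        by (intro borel_measurable_continuous_onI continuous_intros)
      show ?thesis
        using measurable_sets[OF m assms[of i]] by simp
    qed
    then show ?thesis by (intro sets.countable_INT) auto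
  qed
  finally show ?thesis .
qed

lemma emeasure_lborel_cart_prod:
  fixes A :: "'n::finite \<Rightarrow> real set"
  assumes [measurable]: "\<And>i. A i \<in> sets borel"
  shows "emeasure lborel {x::real^'n. \<forall>i. x$i \<in> A i} = (\<Prod>i\<in>UNIV. emeasure lborel (A i))"
proof -
  define idx where "idx b = (SOME i. b = axis i (1::real))" for b :: "real^'n"
  have idx: "idx (axis i 1) = i" for i
    unfolding idx_def by (rule some_equality) (auto simp: axis_eq_axis)
  have S: "{x::real^'n. \<forall>i. x$i \<in> A i} \<in> sets borel"
    by (rule cart_prod_set_borel) fact
  have "emeasure lborel {x::real^'n. \<forall>i. x$i \<in> A i} = (\<integral>\<^sup>+x. indicator {x::real^'n. \<forall>i. x$i \<in> A i} x \<partial>lborel)"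
    using S by simp
  also have "\<dots> = (\<integral>\<^sup>+x. (\<Prod>b\<in>Basis. indicator (A (idx b)) (x \<bullet> b)) \<partial>lborel)"
    by (rule nn_integral_cong) (auto simp: prod_Basis_vec_real idx cart_eq_inner_axis[symmetric] indicator_def prod.neutral)
  also have "\<dots> = (\<Prod>b\<in>Basis. (\<integral>\<^sup>+x. indicator (A (idx b)) x \<partial>lborel))"
    by (rule nn_integral_lborel_prod) auto
  also have "\<dots> = (\<Prod>i\<in>UNIV. emeasure lborel (A i))"
    by (simp add: prod_Basis_vec_real idx)
  finally show ?thesis .
qed

lemma emeasure_lebesgue_borel: "S \<in> sets borel \<Longrightarrow> emeasure lebesgue S = emeasure lborel S"
  by (simp add: emeasure_completion main_part)

lemma epow_ennreal: "0 \<le> z \<Longrightarrow> epow (ennreal z) r = ennreal (z powr r)"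
  by (simp add: epow_def)

lemma epow_mono:
  assumes "0 \<le> r" "x \<le> y"
  shows "epow x r \<le> epow y r"
proof (cases "y = \<infinity>")
  case True then show ?thesis by (simp add: epow_def)
next
  case False
  then have "x \<noteq> \<infinity>" using assms(2) by (metis infinity_ennreal_def top.extremum_uniqueI)
  then show ?thesis using False assms
    by (auto simp: epow_def top.not_eq_extremum intro!: ennreal_leI powr_mono2 enn2real_mono)
qed

lemma epow_0[simp]: "epow 0 q = 0" by (simp add: epow_def)
lemma epow_1[simp]: "epow 1 q = 1" by (simp add: epow_def)

lemma epow_indicator: "0 < q \<Longrightarrow> epow (ennreal (indicator E x)) q = ennreal (indicator E x)"
  by (simp add: epow_def indicator_def)

definition EE :: "nat \<Rightarrow> nat \<Rightarrow> (real^'n::finite) set" where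
  "EE a b = {x. \<forall>i. x$i \<in> FF a b}"

lemma EE_borel: "EE a b \<in> sets borel"
  unfolding EE_def by (rule cart_prod_set_borel) simp

lemma dyadic_cube_eq: "dyadic_cube k m = {x. \<forall>i. x$i \<in> Ik k (m$i)}"
  by (auto simp: dyadic_cube_def Ik_def)

lemma emeasure_dyadic_cube:
  "emeasure lebesgue (dyadic_cube k m :: (real^'n::finite) set) = ennreal (2 powr (real CARD('n) * real_of_int k))"
proof -
  have "emeasure lebesgue (dyadic_cube k m :: (real^'n::finite) set) = emeasure lborel (dyadic_cube k m :: (real^'n::finite) set)"
    unfolding dyadic_cube_eq by (intro emeasure_lebesgue_borel cart_prod_set_borel) simp
  also have "\<dots> = (\<Prod>i\<in>(UNIV::'n set). ennreal (2 powr real_of_int k))"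
    unfolding dyadic_cube_eq by (subst emeasure_lborel_cart_prod) (auto simp: emeasure_Ik)
  also have "\<dots> = ennreal (2 powr (real CARD('n) * real_of_int k))"
    by (simp add: ennreal_power powr_power)
  finally show ?thesis .
qed

lemma measure_dyadic_cube:
  "measure lebesgue (dyadic_cube k m :: (real^'n::finite) set) = 2 powr (real CARD('n) * real_of_int k)"
  by (simp add: measure_def emeasure_dyadic_cube)


lemma cube_value_bound:
  fixes p q :: real
  assumes ba: "b \<le> a" and q0: "0 < q" and qp: "q \<le> p" and rd: "q / p * real a \<le> real a - real b"
  shows "ennreal (measure lebesgue (dyadic_cube k m :: (real^'n::finite) set) powr (1 / p)) *
      epow (ennreal (1 / measure lebesgue (dyadic_cube k m :: (real^'n::finite) set)) *
        (\<integral>\<^sup>+ x\<in>dyadic_cube k m. epow (ennreal (indicator (EE a b :: (real^'n) set) x)) q \<partial>lebesgue)) (1 / q)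
      \<le> ennreal (2 powr (- real CARD('n) * real a / p))"
proof -
  define n where "n = real CARD('n)"
  define r where "r = q / p"
  define T where "T = (1 - r) * real_of_int k - r * real a"
  define M where "M = (2::real) powr (n * real_of_int k)"
  define Y where "Y = (2::real) powr (n * T)"
  have p0: "0 < p" using q0 qp by linarith
  have r0: "0 < r" and r1: "r \<le> 1" using q0 qp p0 by (auto simp: r_def)
  have M0: "M > 0" by (simp add: M_def)
  have mQ: "measure lebesgue (dyadic_cube k m :: (real^'n::finite) set) = M"
    by (simp add: measure_dyadic_cube M_def n_def)
  define S where "S = {x::real^'n. \<forall>i. x$i \<in> Ik k (m$i) \<inter> FF a b}"
  have SE: "dyadic_cube k m \<inter> EE a b = S" by (auto simp: dyadic_cube_eq EE_def S_def)
  have Sb: "S \<in> sets borel" unfolding S_def by (rule cart_prod_set_borel) simp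
  have "(\<integral>\<^sup>+ x\<in>dyadic_cube k m. epow (ennreal (indicator (EE a b :: (real^'n) set) x)) q \<partial>lebesgue)
      = (\<integral>\<^sup>+ x. indicator S x \<partial>lebesgue)"
    by (rule nn_integral_cong) (auto simp: epow_indicator q0 SE[symmetric] indicator_def)
  also have "\<dots> = emeasure lborel S"
    using Sb by (simp add: emeasure_lebesgue_borel)
  also have "\<dots> = (\<Prod>i\<in>UNIV. emeasure lborel (Ik k (m$i) \<inter> FF a b))"
    unfolding S_def by (rule emeasure_lborel_cart_prod) simp
  also have "\<dots> \<le> (\<Prod>i\<in>(UNIV::'n set). ennreal (2 powr T))"
    unfolding T_def by (intro prod_mono_ennreal ID ba r0 r1) (use rd in \<open>simp add: r_def\<close>)
  also have "\<dots> = ennreal Y"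
    by (simp add: ennreal_power powr_power Y_def n_def)
  finally have I: "(\<integral>\<^sup>+ x\<in>dyadic_cube k m. epow (ennreal (indicator (EE a b :: (real^'n) set) x)) q \<partial>lebesgue) \<le> ennreal Y" .
  have "epow (ennreal (1 / M) * (\<integral>\<^sup>+ x\<in>dyadic_cube k m. epow (ennreal (indicator (EE a b :: (real^'n) set) x)) q \<partial>lebesgue)) (1 / q)
     \<le> epow (ennreal (1 / M) * ennreal Y) (1 / q)"
    using q0 I by (intro epow_mono mult_left_mono) auto
  also have "\<dots> = ennreal ((Y / M) powr (1 / q))"
    using M0 by (simp add: ennreal_mult[symmetric] epow_ennreal Y_def)
  finally have J: "epow (ennreal (1 / M) * (\<integral>\<^sup>+ x\<in>dyadic_cube k m. epow (ennreal (indicator (EE a b :: (real^'n) set) x)) q \<partial>lebesgue)) (1 / q)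
     \<le> ennreal ((Y / M) powr (1 / q))" .
  have "ennreal (M powr (1 / p)) * epow (ennreal (1 / M) * (\<integral>\<^sup>+ x\<in>dyadic_cube k m. epow (ennreal (indicator (EE a b :: (real^'n) set) x)) q \<partial>lebesgue)) (1 / q)
     \<le> ennreal (M powr (1 / p)) * ennreal ((Y / M) powr (1 / q))"
    by (intro mult_left_mono J) auto
  also have "\<dots> = ennreal (M powr (1 / p) * (Y / M) powr (1 / q))"
    by (simp add: ennreal_mult[symmetric])
  also have "M powr (1 / p) * (Y / M) powr (1 / q) = 2 powr (- n * real a / p)"
  proof -
    have "M powr (1 / p) * (Y / M) powr (1 / q) = 2 powr (n * real_of_int k / p + (n * T - n * real_of_int k) / q)"
      by (simp add: M_def Y_def powr_powr powr_diff[symmetric] powr_add[symmetric])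
    also have "n * real_of_int k / p + (n * T - n * real_of_int k) / q = - n * real a / p"
      using q0 p0 by (simp add: T_def r_def field_simps)
    finally show ?thesis .
  qed
  finally show ?thesis by (simp add: mQ n_def)
qed

lemma morrey_EE:
  fixes p q :: real
  assumes ba: "b \<le> a" and q0: "0 < q" and qp: "q \<le> p" and rd: "q / p * real a \<le> real a - real b"
  shows "morrey_norm p q (\<lambda>x. ennreal (indicator (EE a b :: (real^'n::finite) set) x))
      \<le> ennreal (2 powr (- real CARD('n) * real a / p))"
  unfolding morrey_norm_def
proof (rule SUP_least)
  fix Q :: "(real^'n) set" assume "Q \<in> dyadic_cubes"
  then obtain k m where Q: "Q = dyadic_cube k m" by (auto simp: dyadic_cubes_def)
  show "ennreal (measure lebesgue Q powr (1 / p)) *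
      epow (ennreal (1 / measure lebesgue Q) *
        (\<integral>\<^sup>+ x\<in>Q. epow (ennreal (indicator (EE a b :: (real^'n) set) x)) q \<partial>lebesgue)) (1 / q)
      \<le> ennreal (2 powr (- real CARD('n) * real a / p))"
    unfolding Q by (rule cube_value_bound[OF assms])
qed


definition pc' :: "nat \<Rightarrow> nat \<Rightarrow> int \<Rightarrow> real set" where
  "pc' a b j = {real_of_int j * 2 powr (- real b) + 2 powr (- real a) / 4 ..< real_of_int j * 2 powr (- real b) + 3 * 2 powr (- real a) / 4}"

definition FF' :: "nat \<Rightarrow> nat \<Rightarrow> real set" where
  "FF' a b = (\<Union>j\<in>{0..<2^b}. pc' a b j)"

definition EE' :: "nat \<Rightarrow> nat \<Rightarrow> (real^'n::finite) set" where
  "EE' a b = {x. \<forall>i. x$i \<in> FF' a b}"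

lemma pc'_borel[measurable]: "pc' a b j \<in> sets borel" by (simp add: pc'_def)
lemma FF'_borel[measurable]: "FF' a b \<in> sets borel" unfolding FF'_def by auto

lemma emeasure_FF':
  assumes "b \<le> a"
  shows "emeasure lborel (FF' a b) = ennreal (2^b * (2 powr (- real a) / 2))"
proof -
  define u where "u = (2::real) powr (- real b)"
  define e where "e = (2::real) powr (- real a)"
  have u: "u > 0" by (simp add: u_def)
  have e: "e > 0" by (simp add: e_def)
  have eu: "e \<le> u" unfolding u_def e_def using assms by (intro powr_mono) auto
  have disj: "disjoint_family_on (pc' a b) {0..<2^b}"
  proof (unfold disjoint_family_on_def, intro ballI impI)
    fix i j :: int assume "i \<noteq> j"
    show "pc' a b i \<inter> pc' a b j = {}"
    proof (rule ccontr)
      assume "pc' a b i \<inter> pc' a b j \<noteq> {}"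
      then obtain x where "x \<in> pc' a b i" "x \<in> pc' a b j" by blast
      then have h: "i * u + e / 4 \<le> x" "x < i * u + 3 * e / 4" "j * u + e / 4 \<le> x" "x < j * u + 3 * e / 4"
        by (auto simp: pc'_def u_def e_def)
      have "real_of_int i * u < real_of_int j * u + 1 * u" using h eu by linarith
      then have "real_of_int i * u < (real_of_int j + 1) * u" by (simp add: algebra_simps)
      then have "real_of_int i < real_of_int j + 1" using u by (simp only: mult_less_cancel_right)
      then have 1: "i \<le> j" by linarith
      have "real_of_int j * u < real_of_int i * u + 1 * u" using h eu by linarith
      then have "real_of_int j * u < (real_of_int i + 1) * u" by (simp add: algebra_simps)
      then have "real_of_int j < real_of_int i + 1" using u by (simp only: mult_less_cancel_right)
      then have "j \<le> i" by linarith
      with 1 \<open>i \<noteq> j\<close> show False by simp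
    qed
  qed
  have "emeasure lborel (FF' a b) = (\<Sum>j\<in>{0..<2^b}. emeasure lborel (pc' a b j))"
    unfolding FF'_def by (rule sum_emeasure[symmetric]) (use disj in auto)
  also have "\<dots> = ennreal (2^b * (2 powr (- real a) / 2))"
    by (simp add: pc'_def emeasure_lborel_Ico ennreal_of_nat_eq_real_of_nat ennreal_mult[symmetric])
  finally show ?thesis .
qed


lemma B_lower:
  fixes x :: "real^'n::finite"
  assumes ba: "b \<le> a" and al: "0 < \<alpha>" "\<alpha> < real CARD('n)" and x: "x \<in> EE' a b"
  shows "ennreal (1 / (real CARD('n) * 2 powr (- real a)) powr (real CARD('n) - \<alpha>) * (2 powr (- real a) / 8) ^ CARD('n))
     \<le> bilinear_frac_int \<alpha> (indicator (EE a b)) (indicator (EE a b)) x"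
proof -
  define n where "n = real CARD('n)"
  define e where "e = (2::real) powr (- real a)"
  define c where "c = 1 / (n * e) powr (n - \<alpha>)"
  define D where "D = {y::real^'n. \<forall>i. y$i \<in> {e/8<..<e/4}}"
  have e: "e > 0" by (simp add: e_def)
  have n: "n > 0" by (simp add: n_def)
  have c: "c > 0" using e n by (simp add: c_def)
  have Db: "D \<in> sets borel" unfolding D_def by (rule cart_prod_set_borel) simp
  have pt: "ennreal (c * indicator D y) \<le> ennreal (indicator (EE a b) (x - y) * indicator (EE a b) (x + y) / norm y powr (n - \<alpha>))" for y
  proof (cases "y \<in> D")
    case False then show ?thesis by simp
  next
    case True
    then have yi: "e/8 < y$i" "y$i < e/4" for i by (auto simp: D_def)
    have "x - y \<in> EE a b \<and> x + y \<in> EE a b"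
    proof -
      have "(x - y)$i \<in> FF a b \<and> (x + y)$i \<in> FF a b" for i
      proof -
        have "x$i \<in> FF' a b" using x by (simp add: EE'_def)
        then obtain j where j: "j \<in> {0..<2^b}" "x$i \<in> pc' a b j" unfolding FF'_def by blast
        then have "(x - y)$i \<in> pc a b j \<and> (x + y)$i \<in> pc a b j"
          using yi[of i] by (auto simp: pc'_def pc_def e_def)
        then show ?thesis using j(1) by (auto simp: FF_def)
      qed
      then show ?thesis by (auto simp: EE_def)
    qed
    then have ind: "indicator (EE a b) (x - y) * indicator (EE a b) (x + y) = (1::real)" by simp
    have y0: "y \<noteq> 0" using yi[of undefined] e by auto
    have "norm y \<le> (\<Sum>i\<in>UNIV. \<bar>y$i\<bar>)" by (rule norm_le_l1_cart)
    also have "\<dots> \<le> of_nat (card (UNIV::'n set)) * e"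
      proof (rule sum_bounded_above)
      fix i :: 'n show "\<bar>y$i\<bar> \<le> e" using yi[of i] e by linarith
    qed
    finally have ny: "norm y \<le> n * e" by (simp add: n_def)
    have "norm y powr (n - \<alpha>) \<le> (n * e) powr (n - \<alpha>)"
      using ny al by (intro powr_mono2) (auto simp: n_def)
    moreover have "norm y powr (n - \<alpha>) > 0" using y0 by simp
    ultimately have "c \<le> 1 / norm y powr (n - \<alpha>)"
      unfolding c_def using n e by (intro divide_left_mono) (auto intro!: mult_pos_pos)
    then show ?thesis using True ind by (intro ennreal_leI) auto
  qed
  have "ennreal c * emeasure lebesgue D = (\<integral>\<^sup>+ y. ennreal c * indicator D y \<partial>lebesgue)"
    using Db by (simp add: nn_integral_cmult_indicator)
  also have "\<dots> = (\<integral>\<^sup>+ y. ennreal (c * indicator D y) \<partial>lebesgue)"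
    by (intro nn_integral_cong) (simp add: indicator_def)
  also have "\<dots> \<le> bilinear_frac_int \<alpha> (indicator (EE a b)) (indicator (EE a b)) x"
    unfolding bilinear_frac_int_def n_def[symmetric]
    by (intro nn_integral_mono pt)
  finally have 1: "ennreal c * emeasure lebesgue D \<le> bilinear_frac_int \<alpha> (indicator (EE a b)) (indicator (EE a b)) x" .
  have "emeasure lebesgue D = emeasure lborel D" using Db by (rule emeasure_lebesgue_borel)
  also have "\<dots> = (\<Prod>i\<in>(UNIV::'n set). ennreal (e / 8))"
    unfolding D_def using e by (subst emeasure_lborel_cart_prod) (auto simp: emeasure_lborel_Ioo)
  also have "\<dots> = ennreal ((e / 8) ^ CARD('n))" using e by (simp add: ennreal_power[symmetric])
  finally have 2: "emeasure lebesgue D = ennreal ((e / 8) ^ CARD('n))" .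
  have "ennreal (c * (e / 8) ^ CARD('n)) = ennreal c * emeasure lebesgue D"
    using 2 c e by (simp add: ennreal_mult)
  with 1 show ?thesis by (simp add: c_def n_def e_def)
qed


lemma EE'_sub: "b \<le> a \<Longrightarrow> EE' a b \<subseteq> dyadic_cube 0 0"
proof
  fix x :: "real^'n" assume ba: "b \<le> a" and x: "x \<in> EE' a b"
  define u where "u = (2::real) powr (- real b)"
  define e where "e = (2::real) powr (- real a)"
  have u: "u > 0" by (simp add: u_def)
  have e: "e > 0" by (simp add: e_def)
  have eu: "e \<le> u" unfolding u_def e_def using ba by (intro powr_mono) auto
  have bu: "2^b * u = 1" by (simp add: u_def powr_minus powr_realpow field_simps)
  have "0 \<le> x$i \<and> x$i < 1" for i
  proof -
    have "x$i \<in> FF' a b" using x by (simp add: EE'_def)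
    then obtain j where j: "j \<in> {0..<2^b}" "x$i \<in> pc' a b j" unfolding FF'_def by blast
    have h: "j * u + e/4 \<le> x$i" "x$i < j * u + 3 * e / 4" using j(2) by (auto simp: pc'_def u_def e_def)
    have j0: "0 \<le> real_of_int j" using j(1) by simp
    have "j + 1 \<le> (2::int)^b" using j(1) by simp
    then have "real_of_int (j + 1) \<le> real_of_int (2^b)" by (simp only: of_int_le_iff)
    then have "real_of_int j + 1 \<le> 2^b" by simp
    then have "(real_of_int j + 1) * u \<le> 2^b * u" using u by (intro mult_right_mono) auto
    then have "(real_of_int j + 1) * u \<le> 1" using bu by simp
    moreover have "0 \<le> real_of_int j * u" using j0 u by simp
    ultimately show ?thesis using h e eu by (simp add: algebra_simps)
  qed
  then show "x \<in> dyadic_cube 0 0" by (simp add: dyadic_cube_def)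
qed

lemma morrey_B_lower:
  assumes ba: "b \<le> a" and al: "0 < \<alpha>" "\<alpha> < real CARD('n::finite)" and t: "0 < t"
  shows "ennreal ((1 / (real CARD('n) * 2 powr (- real a)) powr (real CARD('n) - \<alpha>) * (2 powr (- real a) / 8) ^ CARD('n))
      * ((2^b * (2 powr (- real a) / 2)) ^ CARD('n)) powr (1 / t))
    \<le> morrey_norm s t (bilinear_frac_int \<alpha> (indicator (EE a b :: (real^'n) set)) (indicator (EE a b)))"
proof -
  define w where "w = 1 / (real CARD('n) * 2 powr (- real a)) powr (real CARD('n) - \<alpha>) * (2 powr (- real a) / 8) ^ CARD('n)"
  define \<mu> where "\<mu> = (2^b * (2 powr (- real a) / (2::real))) ^ CARD('n)"
  define B where "B = bilinear_frac_int \<alpha> (indicator (EE a b :: (real^'n) set)) (indicator (EE a b))"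
  define Q0 where "Q0 = (dyadic_cube 0 0 :: (real^'n) set)"
  have w: "w > 0" by (simp add: w_def)
  have mu: "\<mu> > 0" by (simp add: \<mu>_def)
  have Q0: "Q0 \<in> dyadic_cubes" by (auto simp: dyadic_cubes_def Q0_def)
  have mQ: "measure lebesgue Q0 = 1" by (simp add: Q0_def measure_dyadic_cube)
  have EEb: "(EE' a b :: (real^'n) set) \<in> sets borel" unfolding EE'_def by (rule cart_prod_set_borel) simp
  have mE: "emeasure lebesgue (EE' a b :: (real^'n) set) = ennreal \<mu>"
  proof -
    have "emeasure lebesgue (EE' a b :: (real^'n) set) = emeasure lborel (EE' a b :: (real^'n) set)"
      using EEb by (rule emeasure_lebesgue_borel)
    also have "\<dots> = (\<Prod>i\<in>(UNIV::'n set). ennreal (2^b * (2 powr (- real a) / 2)))"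
      unfolding EE'_def by (subst emeasure_lborel_cart_prod) (auto simp: emeasure_FF'[OF ba])
    also have "\<dots> = ennreal \<mu>" by (simp add: \<mu>_def ennreal_power[symmetric])
    finally show ?thesis .
  qed
  have pt: "ennreal (w powr t) * indicator (EE' a b :: (real^'n) set) x \<le> epow (B x) t * indicator Q0 x" for x
  proof (cases "x \<in> EE' a b")
    case True
    then have "x \<in> Q0" using EE'_sub[OF ba] by (auto simp: Q0_def)
    moreover have "epow (ennreal w) t \<le> epow (B x) t"
      using B_lower[OF ba al True] t by (intro epow_mono) (auto simp: B_def w_def)
    ultimately show ?thesis using True w by (simp add: epow_ennreal)
  qed simp
  have EEl: "(EE' a b :: (real^'n) set) \<in> sets lebesgue" using EEb by (intro sets_completionI_sets) simp
  have "ennreal (w powr t) * ennreal \<mu> = (\<integral>\<^sup>+ x. ennreal (w powr t) * indicator (EE' a b :: (real^'n) set) x \<partial>lebesgue)"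
    using nn_integral_cmult_indicator[OF EEl, of "ennreal (w powr t)"] by (simp add: mE)
  also have "\<dots> \<le> (\<integral>\<^sup>+ x\<in>Q0. epow (B x) t \<partial>lebesgue)"
    by (intro nn_integral_mono pt)
  finally have I: "ennreal (w powr t * \<mu>) \<le> (\<integral>\<^sup>+ x\<in>Q0. epow (B x) t \<partial>lebesgue)"
    using w mu by (simp add: ennreal_mult)
  have "ennreal (w * \<mu> powr (1 / t)) = epow (ennreal (w powr t * \<mu>)) (1 / t)"
    using w mu t by (simp add: epow_ennreal powr_mult powr_powr)
  also have "\<dots> \<le> epow (ennreal (1 / measure lebesgue Q0) * (\<integral>\<^sup>+ x\<in>Q0. epow (B x) t \<partial>lebesgue)) (1 / t)"
    using I t by (intro epow_mono) (auto simp: mQ)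
  also have "\<dots> = ennreal (measure lebesgue Q0 powr (1 / s)) *
      epow (ennreal (1 / measure lebesgue Q0) * (\<integral>\<^sup>+ x\<in>Q0. epow (B x) t \<partial>lebesgue)) (1 / t)"
    by (simp add: mQ)
  also have "\<dots> \<le> morrey_norm s t B"
    unfolding morrey_norm_def by (rule SUP_upper[OF Q0])
  finally show ?thesis by (simp add: w_def \<mu>_def B_def)
qed



lemma X_eq:
  fixes N a b :: nat and \<alpha> t :: real
  assumes N: "N > 0"
  shows "(1 / (real N * 2 powr (- real a)) powr (real N - \<alpha>) * (2 powr (- real a) / 8) ^ N) *
         ((2^b * (2 powr (- real a) / 2)) ^ N) powr (1 / t)
       = 2 powr (- real a * \<alpha> + real N * (real b - real a - 1) / t) / (real N powr (real N - \<alpha>) * 8^N)"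
proof -
  have e1: "(real N * 2 powr (- real a)) powr (real N - \<alpha>) = real N powr (real N - \<alpha>) * 2 powr (- real a * (real N - \<alpha>))"
    by (simp add: powr_mult powr_powr)
  have e2: "(2 powr (- real a) / 8) ^ N = 2 powr (- real a * real N) / 8^N"
    by (simp add: power_divide powr_power mult.commute)
  have e3: "(2::real)^b * (2 powr (- real a) / 2) = 2 powr (real b - real a - 1)"
  proof -
    have "(2::real) powr (real b - real a - 1) = 2 powr (real b + (- real a) - 1)" by simp
    also have "\<dots> = 2 powr real b * 2 powr (- real a) / 2 powr 1" by (simp only: powr_diff powr_add)
    also have "\<dots> = 2^b * (2 powr (-real a) / 2)" by (simp add: powr_realpow)
    finally show ?thesis by simp
  qed
  have e4: "((2::real) powr (real b - real a - 1)) ^ N = 2 powr (real N * (real b - real a - 1))"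
    by (simp add: powr_power)
  have e5: "((2::real) powr (real N * (real b - real a - 1))) powr (1 / t) = 2 powr (real N * (real b - real a - 1) / t)"
    by (simp add: powr_powr)
  have "(1 / (real N * 2 powr (- real a)) powr (real N - \<alpha>) * (2 powr (- real a) / 8) ^ N) *
         ((2^b * (2 powr (- real a) / 2)) ^ N) powr (1 / t)
      = (2 powr (- real a * real N) / (2 powr (- real a * (real N - \<alpha>)))) * 2 powr (real N * (real b - real a - 1) / t)
         / (real N powr (real N - \<alpha>) * 8^N)"
    unfolding e1 e2 e3 e4 e5 by (simp add: field_simps)
  also have "2 powr (- real a * real N) / (2 powr (- real a * (real N - \<alpha>))) = (2::real) powr (- real a * \<alpha>)"
    by (simp add: powr_diff[symmetric] algebra_simps)
  also have "2 powr (- real a * \<alpha>) * 2 powr (real N * (real b - real a - 1) / t) = (2::real) powr (- real a * \<alpha> + real N * (real b - real a - 1) / t)"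
    by (simp only: powr_add)
  finally show ?thesis .
qed

theorem theorem3p1:
  fixes \<alpha> s t p1 p2 q1 q2 :: real
  assumes "0 < \<alpha>" and "\<alpha> < real CARD('n::finite)"
    and "0 < t" and "t \<le> s"
    and "0 < q1" and "q1 \<le> p1" and "0 < q2" and "q2 \<le> p2"
    and "1 / s = 1 / p1 + 1 / p2 - \<alpha> / real CARD('n)"
    and "t / s > max (q1 / p1) (q2 / p2)"
  shows "\<not> (\<exists>C>0. \<forall>f g :: real ^ 'n \<Rightarrow> real.
            f \<in> borel_measurable lebesgue \<longrightarrow> g \<in> borel_measurable lebesgue \<longrightarrow>
            (\<forall>x. 0 \<le> f x) \<longrightarrow> (\<forall>x. 0 \<le> g x) \<longrightarrow>
            morrey_norm p1 q1 (\<lambda>x. ennreal (f x)) * morrey_norm p2 q2 (\<lambda>x. ennreal (g x)) < \<infinity> \<longrightarrow>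
            morrey_norm s t (bilinear_frac_int \<alpha> f g)
              \<le> ennreal C * morrey_norm p1 q1 (\<lambda>x. ennreal (f x)) * morrey_norm p2 q2 (\<lambda>x. ennreal (g x)))"
proof
  note al = assms(1,2)
  assume "\<exists>C>0. \<forall>f g :: real ^ 'n \<Rightarrow> real.
            f \<in> borel_measurable lebesgue \<longrightarrow> g \<in> borel_measurable lebesgue \<longrightarrow>
            (\<forall>x. 0 \<le> f x) \<longrightarrow> (\<forall>x. 0 \<le> g x) \<longrightarrow>
            morrey_norm p1 q1 (\<lambda>x. ennreal (f x)) * morrey_norm p2 q2 (\<lambda>x. ennreal (g x)) < \<infinity> \<longrightarrow>
            morrey_norm s t (bilinear_frac_int \<alpha> f g)
              \<le> ennreal C * morrey_norm p1 q1 (\<lambda>x. ennreal (f x)) * morrey_norm p2 q2 (\<lambda>x. ennreal (g x))"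
  then obtain C where C0: "C > 0" and H: "\<forall>f g :: real ^ 'n \<Rightarrow> real.
            f \<in> borel_measurable lebesgue \<longrightarrow> g \<in> borel_measurable lebesgue \<longrightarrow>
            (\<forall>x. 0 \<le> f x) \<longrightarrow> (\<forall>x. 0 \<le> g x) \<longrightarrow>
            morrey_norm p1 q1 (\<lambda>x. ennreal (f x)) * morrey_norm p2 q2 (\<lambda>x. ennreal (g x)) < \<infinity> \<longrightarrow>
            morrey_norm s t (bilinear_frac_int \<alpha> f g)
              \<le> ennreal C * morrey_norm p1 q1 (\<lambda>x. ennreal (f x)) * morrey_norm p2 q2 (\<lambda>x. ennreal (g x))"
    by blast
  define N where "N = CARD('n)"
  define n where "n = real N"
  have N0: "N > 0" by (simp add: N_def)
  have n0: "n > 0" by (simp add: n_def N0)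
  have t0: "0 < t" and s0: "0 < s" using assms by auto
  have p10: "0 < p1" and p20: "0 < p2" using assms by auto
  define \<theta> where "\<theta> = max (q1 / p1) (q2 / p2)"
  have th0: "0 < \<theta>" using assms p10 by (simp add: \<theta>_def less_max_iff_disj)
  have th1: "\<theta> \<le> 1" using assms p10 p20 by (simp add: \<theta>_def)
  have thts: "\<theta> < t / s" using assms by (simp add: \<theta>_def)
  define \<delta> where "\<delta> = 1 / s - \<theta> / t"
  have del: "\<delta> > 0"
  proof -
    have "\<theta> * s < t" using thts s0 by (simp add: field_simps)
    then have "\<theta> / t < 1 / s" using s0 t0 by (simp add: field_simps)
    then show ?thesis by (simp add: \<delta>_def)
  qed
  define K0 where "K0 = n powr (n - \<alpha>) * 8 ^ N"
  have K0: "K0 > 0" using n0 by (simp add: K0_def)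
  obtain a :: nat where a_big: "log 2 (C * K0) + 2 * n / t < real a * (n * \<delta>)"
  proof -
    have "0 < n * \<delta>" using n0 del by simp
    from reals_Archimedean3[OF this] show ?thesis using that by blast
  qed
  define d where "d = nat \<lceil>real a * \<theta>\<rceil>"
  define b where "b = a - d"
  have "0 \<le> real a * \<theta>" using th0 by simp
  then have c0: "0 \<le> \<lceil>real a * \<theta>\<rceil>" by simp
  have dc: "real d = real_of_int \<lceil>real a * \<theta>\<rceil>" using c0 by (simp add: d_def)
  have d1: "real a * \<theta> \<le> real d" unfolding dc by (rule le_of_int_ceiling)
  have d2: "real d \<le> real a * \<theta> + 1" unfolding dc by (rule of_int_ceiling_le_add_one)
  have "real a * \<theta> \<le> real a" using th1 by (simp add: mult_left_le)
  then have "\<lceil>real a * \<theta>\<rceil> \<le> int a" by (simp add: ceiling_le_iff)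
  then have "real d \<le> real a" unfolding dc by linarith
  then have da: "d \<le> a" by simp
  have ba: "b \<le> a" by (simp add: b_def)
  have abd: "real a - real b = real d" using da by (simp add: b_def)
  have rd1: "q1 / p1 * real a \<le> real a - real b"
    using d1 unfolding abd \<theta>_def by (metis max.cobounded1 mult.commute mult_right_mono of_nat_0_le_iff order_trans)
  have rd2: "q2 / p2 * real a \<le> real a - real b"
    using d1 unfolding abd \<theta>_def by (metis max.cobounded2 mult.commute mult_right_mono of_nat_0_le_iff order_trans)
  define f :: "real^'n \<Rightarrow> real" where "f = indicator (EE a b)"
  define Y1 where "Y1 = (2::real) powr (- n * real a / p1)"
  define Y2 where "Y2 = (2::real) powr (- n * real a / p2)"
  have U1: "morrey_norm p1 q1 (\<lambda>x. ennreal (f x)) \<le> ennreal Y1"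
    unfolding f_def Y1_def n_def N_def using morrey_EE[OF ba assms(5,6) rd1] by simp
  have U2: "morrey_norm p2 q2 (\<lambda>x. ennreal (f x)) \<le> ennreal Y2"
    unfolding f_def Y2_def n_def N_def using morrey_EE[OF ba assms(7,8) rd2] by simp
  have fm: "f \<in> borel_measurable lebesgue"
  proof -
    have "EE a b \<in> sets (lebesgue :: (real^'n) measure)"
      using EE_borel by (intro sets_completionI_sets) simp
    then show ?thesis unfolding f_def by (rule borel_measurable_indicator)
  qed
  have fnn: "\<forall>x. 0 \<le> f x" by (simp add: f_def)
  have prod_le: "morrey_norm p1 q1 (\<lambda>x. ennreal (f x)) * morrey_norm p2 q2 (\<lambda>x. ennreal (f x)) \<le> ennreal Y1 * ennreal Y2"
    using U1 U2 by (intro mult_mono) auto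
  have fin: "morrey_norm p1 q1 (\<lambda>x. ennreal (f x)) * morrey_norm p2 q2 (\<lambda>x. ennreal (f x)) < \<infinity>"
    using prod_le by (metis ennreal_mult_less_top ennreal_less_top infinity_ennreal_def le_less_trans)
  have Hf: "morrey_norm s t (bilinear_frac_int \<alpha> f f)
      \<le> ennreal C * morrey_norm p1 q1 (\<lambda>x. ennreal (f x)) * morrey_norm p2 q2 (\<lambda>x. ennreal (f x))"
    using H fm fnn fin by blast
  also have "\<dots> \<le> ennreal C * (ennreal Y1 * ennreal Y2)"
    using prod_le by (simp add: mult.assoc mult_left_mono)
  also have "\<dots> = ennreal (C * Y1 * Y2)"
    using C0 by (simp add: ennreal_mult Y1_def Y2_def mult.assoc)
  finally have up: "morrey_norm s t (bilinear_frac_int \<alpha> f f) \<le> ennreal (C * Y1 * Y2)" .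
  define X where "X = (1 / (real CARD('n) * 2 powr (- real a)) powr (real CARD('n) - \<alpha>) * (2 powr (- real a) / 8) ^ CARD('n))
      * ((2^b * (2 powr (- real a) / 2)) ^ CARD('n)) powr (1 / t)"
  have low: "ennreal X \<le> morrey_norm s t (bilinear_frac_int \<alpha> f f)"
    unfolding X_def f_def by (rule morrey_B_lower[OF ba al t0])
  have XY: "X \<le> C * Y1 * Y2"
    using order_trans[OF low up] C0 by (simp add: Y1_def Y2_def ennreal_le_iff)
  have Xeq: "X = 2 powr (- real a * \<alpha> + n * (real b - real a - 1) / t) / K0"
    unfolding X_def K0_def n_def N_def by (rule X_eq) simp
  have sum_p: "n / p1 + n / p2 = n / s + \<alpha>"
    using assms(9) n0 by (simp add: n_def N_def field_simps)
  have Yeq: "C * Y1 * Y2 = C * 2 powr (- real a * (n / s + \<alpha>))"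
  proof -
    have "Y1 * Y2 = 2 powr (- n * real a / p1 + - n * real a / p2)"
      by (simp only: Y1_def Y2_def powr_add)
    also have "- n * real a / p1 + - n * real a / p2 = - real a * (n / p1 + n / p2)"
      by (simp add: field_simps)
    finally show ?thesis by (simp add: sum_p mult.assoc)
  qed
  define E where "E = real a * n / s - n * (real d + 1) / t"
  have "2 powr (- real a * \<alpha> + n * (real b - real a - 1) / t) \<le> C * K0 * 2 powr (- real a * (n / s + \<alpha>))"
    using XY K0 unfolding Xeq Yeq by (simp add: field_simps)
  then have "2 powr (- real a * \<alpha> + n * (real b - real a - 1) / t) / 2 powr (- real a * (n / s + \<alpha>)) \<le> C * K0"
    by (simp add: field_simps)
  moreover have "- real a * \<alpha> + n * (real b - real a - 1) / t - (- real a * (n / s + \<alpha>)) = E"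
  proof -
    have bb: "real b = real a - real d" using abd by simp
    show ?thesis using t0 s0 unfolding bb by (simp add: E_def field_simps)
  qed
  ultimately have E1: "2 powr E \<le> C * K0" by (simp add: powr_diff[symmetric])
  have "n * (real d + 1) / t \<le> n * (real a * \<theta> + 2) / t"
    using d2 n0 t0 by (intro divide_right_mono mult_left_mono) auto
  moreover have "real a * (n * \<delta>) - 2 * n / t = real a * n / s - n * (real a * \<theta> + 2) / t"
    using t0 s0 by (simp add: \<delta>_def field_simps)
  ultimately have "real a * (n * \<delta>) - 2 * n / t \<le> E" unfolding E_def by linarith
  then have "log 2 (C * K0) < E" using a_big by linarith
  then have "2 powr (log 2 (C * K0)) < 2 powr E" by simp
  then have "C * K0 < 2 powr E" using C0 K0 by simp
  with E1 show False by simp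
qed

end
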